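(* Let $n$ individuals be connected by a directed graph with in-neighborhoods $\mathcal N_i$ (self-loops allowed), and suppose the potential outcomes are linear: $Y_i(\mathbf z)=c_{i,\emptyset}+\sum_{j\in\mathcal N_i}c_{ij}z_j$. Let $\mathrm{TTE}=\frac1n\sum_i(Y_i(\mathbf 1)-Y_i(\mathbf 0))$. Suppose a staggered rollout Bernoulli design is implemented with $T+1$ distinct treatment probabilities $0\le p_0<p_1<\dots<p_T\le1$ ($u_i\sim U[0,1]$ i.i.d., $z_i^t=\mathbb I(u_i\le p_t)$), and the outcomes $Y_i(\mathbf z^t)$ are observed without noise. Then among estimators of the form $$\widehat{\mathrm{TTE}}=\frac1n\sum_{i=1}^n\sum_{t=0}^T\alpha_tY_i(\mathbf z^t)$$ (with constants $\alpha_t$) that are unbiased for $\mathrm{TTE}$, the one minimizing variance has $\alpha_0=\frac{-1}{p_T-p_0}$, $\alpha_T=\frac1{p_T-p_0}$, and $\alpha_1=\dots=\alpha_{T-1}=0$.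
   Context: Unbiasedness is understood as $\mathbb E[\widehat{\mathrm{TTE}}]=\mathrm{TTE}$ for every choice of the linear model coefficients $c_{i,\emptyset},c_{ij}$. *)

theory Defs
  imports "HOL-Probability.Probability"
begin

definition outcome :: "(nat \<Rightarrow> real) \<Rightarrow> (nat \<Rightarrow> nat \<Rightarrow> real) \<Rightarrow> (nat \<Rightarrow> nat set)
    \<Rightarrow> nat \<Rightarrow> (nat \<Rightarrow> real) \<Rightarrow> real" where
  "outcome c0 c N i z = c0 i + (\<Sum>j\<in>N i. c i j * z j)"

definition TTE :: "nat \<Rightarrow> (nat \<Rightarrow> real) \<Rightarrow> (nat \<Rightarrow> nat \<Rightarrow> real) \<Rightarrow> (nat \<Rightarrow> nat set) \<Rightarrow> real" where
  "TTE n c0 c N = (1 / real n) * (\<Sum>i<n. outcome c0 c N i (\<lambda>_. 1) - outcome c0 c N i (\<lambda>_. 0))"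

definition treat :: "(nat \<Rightarrow> real) \<Rightarrow> nat \<Rightarrow> (nat \<Rightarrow> real) \<Rightarrow> nat \<Rightarrow> real" where
  "treat p t u = (\<lambda>j. if u j \<le> p t then 1 else 0)"

definition rollout_space :: "nat \<Rightarrow> (nat \<Rightarrow> real) measure" where
  "rollout_space n = PiM {..<n} (\<lambda>_. uniform_measure lborel {0..1::real})"

definition estimator :: "nat \<Rightarrow> nat \<Rightarrow> (nat \<Rightarrow> real) \<Rightarrow> (nat \<Rightarrow> real) \<Rightarrow> (nat \<Rightarrow> nat \<Rightarrow> real)
    \<Rightarrow> (nat \<Rightarrow> nat set) \<Rightarrow> (nat \<Rightarrow> real) \<Rightarrow> (nat \<Rightarrow> real) \<Rightarrow> real" where
  "estimator n T alpha c0 c N p u =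
     (1 / real n) * (\<Sum>i<n. \<Sum>t\<le>T. alpha t * outcome c0 c N i (treat p t u))"

definition est_mean where
  "est_mean n T alpha c0 c N p = (\<integral>u. estimator n T alpha c0 c N p u \<partial>rollout_space n)"

definition est_var where
  "est_var n T alpha c0 c N p =
     (\<integral>u. (estimator n T alpha c0 c N p u - est_mean n T alpha c0 c N p)\<^sup>2 \<partial>rollout_space n)"

definition unbiased :: "nat \<Rightarrow> nat \<Rightarrow> (nat \<Rightarrow> nat set) \<Rightarrow> (nat \<Rightarrow> real) \<Rightarrow> (nat \<Rightarrow> real) \<Rightarrow> bool" where
  "unbiased n T N p alpha \<longleftrightarrow> (\<forall>c0 c. est_mean n T alpha c0 c N p = TTE n c0 c N)"

end

theory Submission
  imports Defs
begin


abbreviation mu :: "real measure" where "mu \<equiv> uniform_measure lborel {0..1::real}"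

lemma mu_prob: "prob_space mu"
  by (rule prob_space_uniform_measure) auto

lemma space_mu[simp]: "space mu = UNIV" by simp
lemma sets_mu[simp]: "sets mu = sets borel" by simp

lemma rs_prob: "prob_space (rollout_space n)"
  unfolding rollout_space_def by (rule prob_space_PiM) (rule mu_prob)

lemma psf: "product_sigma_finite (\<lambda>_. mu)"
  unfolding product_sigma_finite_def
  using mu_prob prob_space_imp_sigma_finite by blast

lemma mu_ind:
  assumes "0 \<le> a" "a \<le> 1"
  shows "(\<integral>x. (if x \<le> a then 1 else 0::real) \<partial>mu) = a"
proof -
  have "(\<lambda>x. (if x \<le> a then 1 else 0::real)) = indicator {..a}"
    by (auto simp: indicator_def)
  hence "(\<integral>x. (if x \<le> a then 1 else 0::real) \<partial>mu) = measure mu {..a}" by simp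
  also have "\<dots> = measure lborel ({0..1} \<inter> {..a}) / measure lborel {0..1::real}"
    by (subst measure_uniform_measure) auto
  also have "{0..1} \<inter> {..a} = {0..a}" using assms by auto
  finally show ?thesis using assms by simp
qed

lemma bounded_integrable:
  fixes f :: "'a \<Rightarrow> real"
  assumes "prob_space M" "f \<in> borel_measurable M" "\<And>x. \<bar>f x\<bar> \<le> B"
  shows "integrable M f"
proof -
  interpret prob_space M by fact
  show ?thesis by (rule integrable_const_bound[where B=B]) (use assms in auto)
qed

lemma mu_const: "integrable mu (\<lambda>x. c::real)"
  using prob_space.finite_measure[OF mu_prob] finite_measure.integrable_const by blast

lemma prod1:
  fixes f :: "real \<Rightarrow> real"
  assumes "j < n" "integrable mu f"
  shows "(\<integral>u. f (u j) \<partial>rollout_space n) = (\<integral>x. f x \<partial>mu)"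
proof -
  interpret product_sigma_finite "\<lambda>_. mu" by (rule psf)
  have "(\<integral>u. (\<Prod>i\<in>{..<n}. (\<lambda>i x. if i = j then f x else 1) i (u i)) \<partial>Pi\<^sub>M {..<n} (\<lambda>_. mu))
     = (\<Prod>i\<in>{..<n}. integral\<^sup>L mu ((\<lambda>i x. if i = j then f x else 1) i))"
    apply (rule product_integral_prod)
     apply simp
    subgoal for i using assms mu_const by (cases "i = j"; cases "i = k") simp_all
    done
  moreover have "(\<Prod>i\<in>{..<n}. integral\<^sup>L mu ((\<lambda>i x. if i = j then f x else 1) i))
     = (\<Prod>i\<in>{..<n}. if i = j then integral\<^sup>L mu f else 1)"
    using prob_space.prob_space[OF mu_prob] by (intro prod.cong) auto
  ultimately show ?thesis using assms unfolding rollout_space_def by (simp add: prod.delta)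
qed

lemma prod2:
  fixes f g :: "real \<Rightarrow> real"
  assumes "j < n" "k < n" "j \<noteq> k" "integrable mu f" "integrable mu g"
  shows "(\<integral>u. f (u j) * g (u k) \<partial>rollout_space n) = (\<integral>x. f x \<partial>mu) * (\<integral>x. g x \<partial>mu)"
proof -
  interpret product_sigma_finite "\<lambda>_. mu" by (rule psf)
  let ?h = "\<lambda>i x. if i = j then f x else if i = k then g x else 1"
  have "(\<integral>u. (\<Prod>i\<in>{..<n}. ?h i (u i)) \<partial>Pi\<^sub>M {..<n} (\<lambda>_. mu))
     = (\<Prod>i\<in>{..<n}. integral\<^sup>L mu (?h i))"
    apply (rule product_integral_prod)
     apply simp
    subgoal for i using assms mu_const by (cases "i = j"; cases "i = k") simp_all
    done
  moreover have "\<And>u. (\<Prod>i\<in>{..<n}. ?h i (u i)) = f (u j) * g (u k)"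
  proof -
    fix u :: "nat \<Rightarrow> real"
    have "(\<Prod>i\<in>{..<n}. ?h i (u i)) = ?h j (u j) * (\<Prod>i\<in>{..<n}-{j}. ?h i (u i))"
      using assms by (subst prod.remove[of _ j]) auto
    also have "(\<Prod>i\<in>{..<n}-{j}. ?h i (u i)) = (\<Prod>i\<in>{..<n}-{j}. if i = k then g (u i) else 1)"
      by (rule prod.cong) auto
    also have "\<dots> = g (u k)" using assms by (subst prod.delta) auto
    finally show "(\<Prod>i\<in>{..<n}. ?h i (u i)) = f (u j) * g (u k)" by simp
  qed
  moreover have "(\<Prod>i\<in>{..<n}. integral\<^sup>L mu (?h i)) = integral\<^sup>L mu (?h j) * (\<Prod>i\<in>{..<n}-{j}. integral\<^sup>L mu (?h i))"
      using assms by (subst prod.remove[of _ j]) auto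
  moreover have "(\<Prod>i\<in>{..<n}-{j}. integral\<^sup>L mu (?h i)) = (\<Prod>i\<in>{..<n}-{j}. if i = k then integral\<^sup>L mu g else 1)"
    using prob_space.prob_space[OF mu_prob] by (intro prod.cong) auto
  moreover have "\<dots> = integral\<^sup>L mu g" using assms by (subst prod.delta) auto
  ultimately show ?thesis using assms unfolding rollout_space_def by simp
qed


definition Xf :: "(nat \<Rightarrow> real) \<Rightarrow> (nat \<Rightarrow> real) \<Rightarrow> nat \<Rightarrow> real \<Rightarrow> real" where
  "Xf alpha p T x = (\<Sum>t\<le>T. alpha t * (if x \<le> p t then 1 else 0))"

definition Wt :: "(nat \<Rightarrow> nat set) \<Rightarrow> (nat \<Rightarrow> nat \<Rightarrow> real) \<Rightarrow> nat \<Rightarrow> nat \<Rightarrow> real" where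
  "Wt N c n j = (\<Sum>i<n. if j \<in> N i then c i j else 0)"

lemma ind_meas: "(\<lambda>x::real. if x \<le> a then 1 else (0::real)) \<in> borel_measurable borel"
  by measurable

lemma Xf_meas: "Xf alpha p T \<in> borel_measurable borel"
  unfolding Xf_def by measurable

lemma Xf_bound: "\<bar>Xf alpha p T x\<bar> \<le> (\<Sum>t\<le>T. \<bar>alpha t\<bar>)"
  unfolding Xf_def
proof (rule order_trans[OF sum_abs])
  show "(\<Sum>t\<le>T. \<bar>alpha t * (if x \<le> p t then 1 else 0)\<bar>) \<le> (\<Sum>t\<le>T. \<bar>alpha t\<bar>)"
    by (rule sum_mono) (simp add: abs_mult)
qed

lemma mu_int: 
  fixes f :: "real \<Rightarrow> real"
  assumes "f \<in> borel_measurable borel" "\<And>x. \<bar>f x\<bar> \<le> B"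
  shows "integrable mu f"
  by (rule bounded_integrable[OF mu_prob _ assms(2)]) (use assms(1) in simp)

lemma comp_meas:
  fixes f :: "real \<Rightarrow> real"
  assumes "j < n" "f \<in> borel_measurable borel"
  shows "(\<lambda>u. f (u j)) \<in> borel_measurable (rollout_space n)"
proof -
  have "(\<lambda>u. u j) \<in> measurable (rollout_space n) mu"
    unfolding rollout_space_def using assms(1) by (intro measurable_component_singleton) auto
  hence "(\<lambda>u. u j) \<in> measurable (rollout_space n) borel"
    using measurable_cong_sets[of "rollout_space n" "rollout_space n" mu borel] by simp
  thus ?thesis using assms(2) by (rule measurable_compose)
qed

lemma rs_int1:
  fixes f :: "real \<Rightarrow> real"
  assumes "j < n" "f \<in> borel_measurable borel" "\<And>x. \<bar>f x\<bar> \<le> B"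
  shows "integrable (rollout_space n) (\<lambda>u. f (u j))"
  by (rule bounded_integrable[OF rs_prob comp_meas[OF assms(1,2)]]) (use assms(3) in auto)

lemma rs_int2:
  fixes f g :: "real \<Rightarrow> real"
  assumes "j < n" "k < n" "f \<in> borel_measurable borel" "\<And>x. \<bar>f x\<bar> \<le> B"
     "g \<in> borel_measurable borel" "\<And>x. \<bar>g x\<bar> \<le> C"
  shows "integrable (rollout_space n) (\<lambda>u. f (u j) * g (u k))"
proof (rule bounded_integrable[OF rs_prob])
  show "(\<lambda>u. f (u j) * g (u k)) \<in> borel_measurable (rollout_space n)"
    using comp_meas[OF assms(1,3)] comp_meas[OF assms(2,5)] by measurable
  fix u :: "nat \<Rightarrow> real"
  show "\<bar>f (u j) * g (u k)\<bar> \<le> B * C"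
    unfolding abs_mult by (rule mult_mono) (use assms(4,6) abs_ge_zero order_trans in blast)+
qed

lemma Xf_mean:
  assumes "\<forall>t\<le>T. 0 \<le> p t \<and> p t \<le> 1"
  shows "(\<integral>x. Xf alpha p T x \<partial>mu) = (\<Sum>t\<le>T. alpha t * p t)"
proof -
  have "(\<integral>x. Xf alpha p T x \<partial>mu) = (\<Sum>t\<le>T. (\<integral>x. alpha t * (if x \<le> p t then 1 else 0) \<partial>mu))"
    unfolding Xf_def
    by (rule Bochner_Integration.integral_sum[where I="{..T}" and M=mu and f="\<lambda>t x. alpha t * (if x \<le> p t then 1 else 0)"])
       (auto intro!: integrable_mult_right mu_int[OF ind_meas, of _ 1])
  also have "\<dots> = (\<Sum>t\<le>T. alpha t * p t)"
    using assms by (intro sum.cong refl) (simp add: mu_ind)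
  finally show ?thesis .
qed

lemma est_pointwise:
  assumes "\<forall>i<n. N i \<subseteq> {..<n}"
  shows "estimator n T alpha c0 c N p u = (1 / real n) * ((\<Sum>t\<le>T. alpha t) * (\<Sum>i<n. c0 i)
          + (\<Sum>j<n. Wt N c n j * Xf alpha p T (u j)))"
proof -
  have "(\<Sum>t\<le>T. alpha t * outcome c0 c N i (treat p t u)) =
        (\<Sum>t\<le>T. alpha t) * c0 i + (\<Sum>j<n. (if j \<in> N i then c i j else 0) * Xf alpha p T (u j))"
    if "i < n" for i
  proof -
    have "(\<Sum>t\<le>T. alpha t * outcome c0 c N i (treat p t u)) =
          (\<Sum>t\<le>T. alpha t * c0 i + (\<Sum>j\<in>N i. c i j * (alpha t * (if u j \<le> p t then 1 else 0))))"
      unfolding outcome_def treat_def by (simp add: algebra_simps sum_distrib_left)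
    also have "\<dots> = (\<Sum>t\<le>T. alpha t) * c0 i + (\<Sum>j\<in>N i. c i j * Xf alpha p T (u j))"
    proof -
      have "(\<Sum>t\<le>T. \<Sum>j\<in>N i. c i j * (alpha t * (if u j \<le> p t then 1 else 0)))
          = (\<Sum>j\<in>N i. \<Sum>t\<le>T. c i j * (alpha t * (if u j \<le> p t then 1 else 0)))"
        by (rule sum.swap)
      also have "\<dots> = (\<Sum>j\<in>N i. c i j * Xf alpha p T (u j))"
        unfolding Xf_def by (simp add: sum_distrib_left)
      finally show ?thesis by (simp add: sum.distrib sum_distrib_right)
    qed
    also have "(\<Sum>j\<in>N i. c i j * Xf alpha p T (u j)) = (\<Sum>j<n. (if j \<in> N i then c i j else 0) * Xf alpha p T (u j))"
    proof -
      have "(\<Sum>j<n. (if j \<in> N i then c i j else 0) * Xf alpha p T (u j))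
          = (\<Sum>j<n. if j \<in> N i then c i j * Xf alpha p T (u j) else 0)"
        by (rule sum.cong) auto
      also have "\<dots> = (\<Sum>j\<in>{..<n} \<inter> N i. c i j * Xf alpha p T (u j))"
        by (rule sum.inter_restrict[symmetric]) simp
      also have "{..<n} \<inter> N i = N i" using assms that by auto
      finally show ?thesis by simp
    qed
    finally show ?thesis .
  qed
  hence "(\<Sum>i<n. \<Sum>t\<le>T. alpha t * outcome c0 c N i (treat p t u)) =
     (\<Sum>i<n. (\<Sum>t\<le>T. alpha t) * c0 i + (\<Sum>j<n. (if j \<in> N i then c i j else 0) * Xf alpha p T (u j)))"
    by (intro sum.cong) auto
  also have "\<dots> = (\<Sum>t\<le>T. alpha t) * (\<Sum>i<n. c0 i) + (\<Sum>j<n. Wt N c n j * Xf alpha p T (u j))"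
  proof -
    have "(\<Sum>i<n. \<Sum>j<n. (if j \<in> N i then c i j else 0) * Xf alpha p T (u j))
        = (\<Sum>j<n. \<Sum>i<n. (if j \<in> N i then c i j else 0) * Xf alpha p T (u j))"
      by (rule sum.swap)
    also have "\<dots> = (\<Sum>j<n. Wt N c n j * Xf alpha p T (u j))"
      unfolding Wt_def by (simp add: sum_distrib_right)
    finally show ?thesis by (simp add: sum.distrib sum_distrib_left)
  qed
  finally show ?thesis unfolding estimator_def by simp
qed



lemma inner_restrict:
  fixes N :: "nat \<Rightarrow> nat set" and n :: nat
  assumes "N i \<subseteq> {..<n}"
  shows "(\<Sum>j\<in>N i. f j) = (\<Sum>j<n. if j \<in> N i then f j else (0::real))"
proof -
  have "(\<Sum>j<n. if j \<in> N i then f j else 0) = (\<Sum>j\<in>{..<n} \<inter> N i. f j)"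
    by (rule sum.inter_restrict[symmetric]) simp
  also have "{..<n} \<inter> N i = N i" using assms by auto
  finally show ?thesis by simp
qed

lemma TTE_formula:
  assumes "\<forall>i<n. N i \<subseteq> {..<n}"
  shows "TTE n c0 c N = (1 / real n) * (\<Sum>j<n. Wt N c n j)"
proof -
  have "(\<Sum>i<n. outcome c0 c N i (\<lambda>_. 1) - outcome c0 c N i (\<lambda>_. 0))
      = (\<Sum>i<n. \<Sum>j<n. if j \<in> N i then c i j else 0)"
    using assms by (intro sum.cong refl) (simp add: outcome_def inner_restrict)
  also have "\<dots> = (\<Sum>j<n. \<Sum>i<n. if j \<in> N i then c i j else 0)" by (rule sum.swap)
  finally show ?thesis unfolding TTE_def Wt_def by simp
qed

lemma est_mean_formula:
  assumes "\<forall>i<n. N i \<subseteq> {..<n}"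
  shows "est_mean n T alpha c0 c N p = (1 / real n) * ((\<Sum>t\<le>T. alpha t) * (\<Sum>i<n. c0 i)
          + (\<Sum>j<n. Wt N c n j) * (\<integral>x. Xf alpha p T x \<partial>mu))"
proof -
  let ?R = "rollout_space n"
  let ?A = "(\<Sum>t\<le>T. alpha t) * (\<Sum>i<n. c0 i)"
  interpret R: prob_space ?R by (rule rs_prob)
  have intj: "integrable ?R (\<lambda>u. Wt N c n j * Xf alpha p T (u j))" if "j < n" for j
    by (intro integrable_mult_right rs_int1[OF that Xf_meas Xf_bound])
  have "est_mean n T alpha c0 c N p = (\<integral>u. (1 / real n) * (?A + (\<Sum>j<n. Wt N c n j * Xf alpha p T (u j))) \<partial>?R)"
    unfolding est_mean_def by (rule Bochner_Integration.integral_cong[OF refl]) (rule est_pointwise[OF assms])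
  also have "\<dots> = (1 / real n) * (\<integral>u. ?A + (\<Sum>j<n. Wt N c n j * Xf alpha p T (u j)) \<partial>?R)"
    by (rule integral_mult_right_zero)
  also have "(\<integral>u. ?A + (\<Sum>j<n. Wt N c n j * Xf alpha p T (u j)) \<partial>?R)
      = ?A + (\<integral>u. (\<Sum>j<n. Wt N c n j * Xf alpha p T (u j)) \<partial>?R)"
    by (subst Bochner_Integration.integral_add) (auto intro!: Bochner_Integration.integrable_sum intj simp: R.prob_space)
  also have "(\<integral>u. (\<Sum>j<n. Wt N c n j * Xf alpha p T (u j)) \<partial>?R)
      = (\<Sum>j<n. (\<integral>u. Wt N c n j * Xf alpha p T (u j) \<partial>?R))"
    by (rule Bochner_Integration.integral_sum) (rule intj, simp)
  also have "\<dots> = (\<Sum>j<n. Wt N c n j * (\<integral>x. Xf alpha p T x \<partial>mu))"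
    by (intro sum.cong refl) (simp add: prod1[OF _ mu_int[OF Xf_meas Xf_bound]])
  finally show ?thesis by (simp add: sum_distrib_right)
qed

lemma est_var_formula:
  assumes "\<forall>i<n. N i \<subseteq> {..<n}"
  shows "est_var n T alpha c0 c N p = (1 / real n)^2 * (\<Sum>j<n. (Wt N c n j)^2)
          * (\<integral>x. (Xf alpha p T x - (\<integral>x. Xf alpha p T x \<partial>mu))^2 \<partial>mu)"
proof -
  let ?R = "rollout_space n"
  let ?m = "\<integral>x. Xf alpha p T x \<partial>mu"
  let ?W = "Wt N c n"
  define Y where "Y = (\<lambda>x. Xf alpha p T x - ?m)"
  let ?B = "(\<Sum>t\<le>T. \<bar>alpha t\<bar>) + \<bar>?m\<bar>"
  interpret R: prob_space ?R by (rule rs_prob)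
  interpret U: prob_space mu by (rule mu_prob)
  have Ym: "Y \<in> borel_measurable borel" unfolding Y_def using Xf_meas by measurable
  have Yb: "\<bar>Y x\<bar> \<le> ?B" for x unfolding Y_def
    using Xf_bound[of alpha p T x] by linarith
  have Yi: "integrable mu Y" by (rule mu_int[OF Ym Yb])
  have YYm: "(\<lambda>x. Y x * Y x) \<in> borel_measurable borel" using Ym by measurable
  have YYi: "integrable mu (\<lambda>x. Y x * Y x)"
  proof (rule mu_int[OF YYm, of "?B * ?B"])
    fix x
    have "0 \<le> ?B" by (rule order_trans[OF abs_ge_zero Yb])
    thus "\<bar>Y x * Y x\<bar> \<le> ?B * ?B" unfolding abs_mult
      by (intro mult_mono Yb) auto
  qed
  have Y0: "(\<integral>x. Y x \<partial>mu) = 0"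
    unfolding Y_def by (subst Bochner_Integration.integral_diff)
       (auto intro: mu_int[OF Xf_meas Xf_bound] simp: U.prob_space)
  have pt: "estimator n T alpha c0 c N p u - est_mean n T alpha c0 c N p
      = (1 / real n) * (\<Sum>j<n. ?W j * Y (u j))" for u
  proof -
    have eq: "(\<Sum>j<n. ?W j * Y (u j)) = (\<Sum>j<n. ?W j * Xf alpha p T (u j)) - (\<Sum>j<n. ?W j) * ?m"
      unfolding Y_def right_diff_distrib sum_subtractf sum_distrib_right ..
    show ?thesis
      unfolding est_pointwise[OF assms] est_mean_formula[OF assms] eq
      by (simp only: ring_distribs)
  qed
  have sq: "(estimator n T alpha c0 c N p u - est_mean n T alpha c0 c N p)^2
      = (1 / real n)^2 * (\<Sum>j<n. \<Sum>k<n. ?W j * ?W k * (Y (u j) * Y (u k)))" for u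
  proof -
    have "(\<Sum>j<n. ?W j * Y (u j))^2 = (\<Sum>j<n. \<Sum>k<n. ?W j * ?W k * (Y (u j) * Y (u k)))"
      unfolding power2_eq_square sum_product by (simp only: mult_ac)
    thus ?thesis unfolding pt power_mult_distrib by simp
  qed
  have intjk: "integrable ?R (\<lambda>u. ?W j * ?W k * (Y (u j) * Y (u k)))" if "j < n" "k < n" for j k
    by (intro integrable_mult_right rs_int2[OF that Ym Yb Ym Yb])
  have Ejk: "(\<integral>u. Y (u j) * Y (u k) \<partial>?R) = (if j = k then (\<integral>x. Y x * Y x \<partial>mu) else 0)"
    if "j < n" "k < n" for j k
  proof (cases "j = k")
    case True
    then show ?thesis using prod1[OF that(1) YYi] by simp
  next
    case False
    then show ?thesis using prod2[OF that False Yi Yi] Y0 by simp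
  qed
  have "est_var n T alpha c0 c N p = (\<integral>u. (1 / real n)^2 * (\<Sum>j<n. \<Sum>k<n. ?W j * ?W k * (Y (u j) * Y (u k))) \<partial>?R)"
    unfolding est_var_def by (rule Bochner_Integration.integral_cong[OF refl]) (rule sq)
  also have "\<dots> = (1 / real n)^2 * (\<integral>u. (\<Sum>j<n. \<Sum>k<n. ?W j * ?W k * (Y (u j) * Y (u k))) \<partial>?R)"
    by (rule integral_mult_right_zero)
  also have "(\<integral>u. (\<Sum>j<n. \<Sum>k<n. ?W j * ?W k * (Y (u j) * Y (u k))) \<partial>?R)
      = (\<Sum>j<n. (\<integral>u. (\<Sum>k<n. ?W j * ?W k * (Y (u j) * Y (u k))) \<partial>?R))"
    by (rule Bochner_Integration.integral_sum) (rule Bochner_Integration.integrable_sum, rule intjk, simp, simp)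
  also have "\<dots> = (\<Sum>j<n. \<Sum>k<n. (\<integral>u. ?W j * ?W k * (Y (u j) * Y (u k)) \<partial>?R))"
    by (intro sum.cong refl Bochner_Integration.integral_sum) (rule intjk, simp, simp)
  also have "\<dots> = (\<Sum>j<n. \<Sum>k<n. if k = j then ?W j * ?W j * (\<integral>x. Y x * Y x \<partial>mu) else 0)"
    by (intro sum.cong refl) (simp add: Ejk)
  also have "\<dots> = (\<Sum>j<n. (?W j)^2) * (\<integral>x. Y x * Y x \<partial>mu)"
    by (simp add: sum_distrib_right power2_eq_square)
  finally show ?thesis unfolding Y_def by (simp add: power2_eq_square)
qed



lemma opt_sum:
  fixes T :: nat
  assumes "T \<ge> 1"
  shows "(\<Sum>t\<le>T. (if t = 0 then a else if t = T then b else 0) * f t) = a * f 0 + b * (f T :: real)"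
proof -
  obtain T' where T: "T = Suc T'" using assms by (cases T) auto
  have "(\<Sum>t\<le>T'. (if t = 0 then a else if t = T then b else 0) * f t)
      = (\<Sum>t\<le>T'. if t = 0 then a * f t else 0)"
    using T by (intro sum.cong refl) auto
  also have "\<dots> = a * f 0" by (simp add: sum.delta')
  finally show ?thesis unfolding T sum.atMost_Suc by simp
qed

lemma p_props:
  fixes T t :: nat and p :: "nat \<Rightarrow> real"
  assumes "strict_mono_on {..T} p" "0 \<le> p 0" "p T \<le> 1" "t \<le> T"
  shows "p 0 \<le> p t" "p t \<le> p T" "0 \<le> p t" "p t \<le> 1"
proof -
  show "p 0 \<le> p t"
    using assms strict_mono_onD[OF assms(1), of 0 t] by (cases "t = 0") auto
  show "p t \<le> p T"
    using assms strict_mono_onD[OF assms(1), of t T] by (cases "t = T") auto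
  then show "0 \<le> p t" "p t \<le> 1" using \<open>p 0 \<le> p t\<close> assms by auto
qed

lemma mu_int_sq:
  fixes f :: "real \<Rightarrow> real"
  assumes "f \<in> borel_measurable borel" "\<And>x. \<bar>f x\<bar> \<le> B"
  shows "integrable mu (\<lambda>x. (f x)^2)"
proof (rule mu_int[of _ "B^2"])
  show "(\<lambda>x. (f x)^2) \<in> borel_measurable borel" using assms(1) by measurable
  fix x
  have "\<bar>(f x)^2\<bar> = \<bar>f x\<bar>^2" by simp
  also have "\<dots> \<le> B^2" by (rule power_mono[OF assms(2)]) simp
  finally show "\<bar>(f x)^2\<bar> \<le> B^2" .
qed

lemma one_d_opt:
  assumes T1: "T \<ge> 1" and sm: "strict_mono_on {..T} p" and p0: "0 \<le> p 0" and pT: "p T \<le> 1"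
  defines "ao \<equiv> (\<lambda>t. if t = 0 then -1 / (p T - p 0) else if t = T then 1 / (p T - p 0) else 0)"
  shows "(\<Sum>t\<le>T. ao t) = 0" "(\<integral>x. Xf ao p T x \<partial>mu) = 1"
proof -
  interpret U: prob_space mu by (rule mu_prob)
  have pr: "\<forall>t\<le>T. 0 \<le> p t \<and> p t \<le> 1" using p_props[OF sm p0 pT] by blast
  have lt: "p 0 < p T" using T1 by (intro strict_mono_onD[OF sm]) auto
  define L where "L = p T - p 0"
  have L0: "L > 0" using lt L_def by simp
  define c where "c = 1 / L"
  have cL: "c * L = 1" using L0 c_def by simp
  define g where "g = (\<lambda>x::real. (if x \<le> p T then 1 else 0) - (if x \<le> p 0 then 1 else (0::real)))"
  have gm: "g \<in> borel_measurable borel" unfolding g_def by measurable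
  have gb: "\<bar>g x\<bar> \<le> 1" for x unfolding g_def using lt by auto
  have gi: "integrable mu g" by (rule mu_int[OF gm gb])
  have gg: "g x * g x = g x" for x unfolding g_def using lt by auto
  have gint: "(\<integral>x. g x \<partial>mu) = L"
    unfolding g_def L_def
    by (subst Bochner_Integration.integral_diff)
       (auto intro!: mu_int[OF ind_meas, of _ 1] simp: mu_ind[of "p T"] mu_ind[of "p 0"] p0 pT
         order_trans[OF p0 less_imp_le[OF lt]] order_trans[OF less_imp_le[OF lt] pT])
  have ao_eq: "ao = (\<lambda>t. if t = 0 then - c else if t = T then c else 0)"
    unfolding ao_def c_def L_def by auto
  show s_ao: "(\<Sum>t\<le>T. ao t) = 0"
    using opt_sum[OF T1, of "- c" c "\<lambda>_. 1"] unfolding ao_eq by simp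
  have Xao: "Xf ao p T x = c * g x" for x
    unfolding Xf_def ao_eq g_def opt_sum[OF T1] by (simp add: algebra_simps)
  have mao: "(\<integral>x. Xf ao p T x \<partial>mu) = 1"
    unfolding Xao using gint cL by simp
  then show "(\<integral>x. Xf ao p T x \<partial>mu) = 1" .
qed

lemma one_d:
  fixes alpha :: "nat \<Rightarrow> real"
  assumes T1: "T \<ge> 1" and sm: "strict_mono_on {..T} p" and p0: "0 \<le> p 0" and pT: "p T \<le> 1"
    and s0: "(\<Sum>t\<le>T. alpha t) = 0" and m1: "(\<integral>x. Xf alpha p T x \<partial>mu) = 1"
  defines "ao \<equiv> (\<lambda>t. if t = 0 then -1 / (p T - p 0) else if t = T then 1 / (p T - p 0) else 0)"
  shows "(\<Sum>t\<le>T. ao t) = 0" "(\<integral>x. Xf ao p T x \<partial>mu) = 1"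
    "(\<integral>x. (Xf ao p T x - (\<integral>x. Xf ao p T x \<partial>mu))^2 \<partial>mu)
      \<le> (\<integral>x. (Xf alpha p T x - (\<integral>x. Xf alpha p T x \<partial>mu))^2 \<partial>mu)"
proof -
  interpret U: prob_space mu by (rule mu_prob)
  have pr: "\<forall>t\<le>T. 0 \<le> p t \<and> p t \<le> 1" using p_props[OF sm p0 pT] by blast
  have lt: "p 0 < p T" using T1 by (intro strict_mono_onD[OF sm]) auto
  define L where "L = p T - p 0"
  have L0: "L > 0" using lt L_def by simp
  define c where "c = 1 / L"
  have cL: "c * L = 1" using L0 c_def by simp
  define g where "g = (\<lambda>x::real. (if x \<le> p T then 1 else 0) - (if x \<le> p 0 then 1 else (0::real)))"
  have gm: "g \<in> borel_measurable borel" unfolding g_def by measurable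
  have gb: "\<bar>g x\<bar> \<le> 1" for x unfolding g_def using lt by auto
  have gi: "integrable mu g" by (rule mu_int[OF gm gb])
  have gg: "g x * g x = g x" for x unfolding g_def using lt by auto
  have gint: "(\<integral>x. g x \<partial>mu) = L"
    unfolding g_def L_def
    by (subst Bochner_Integration.integral_diff)
       (auto intro!: mu_int[OF ind_meas, of _ 1] simp: mu_ind[of "p T"] mu_ind[of "p 0"] p0 pT
         order_trans[OF p0 less_imp_le[OF lt]] order_trans[OF less_imp_le[OF lt] pT])
  have ao_eq: "ao = (\<lambda>t. if t = 0 then - c else if t = T then c else 0)"
    unfolding ao_def c_def L_def by auto
  show s_ao: "(\<Sum>t\<le>T. ao t) = 0"
    using opt_sum[OF T1, of "- c" c "\<lambda>_. 1"] unfolding ao_eq by simp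
  have Xao: "Xf ao p T x = c * g x" for x
    unfolding Xf_def ao_eq g_def opt_sum[OF T1] by (simp add: algebra_simps)
  have mao: "(\<integral>x. Xf ao p T x \<partial>mu) = 1"
    unfolding Xao using gint cL by simp
  then show "(\<integral>x. Xf ao p T x \<partial>mu) = 1" .
  have ag: "Xf alpha p T x * g x = Xf alpha p T x" for x
  proof (cases "x \<le> p 0")
    case True
    have "Xf alpha p T x = (\<Sum>t\<le>T. alpha t)"
      unfolding Xf_def using True p_props[OF sm p0 pT] by (intro sum.cong refl) (auto dest: order_trans)
    then show ?thesis using s0 by simp
  next
    case F: False
    show ?thesis
    proof (cases "x \<le> p T")
      case True then show ?thesis using F unfolding g_def by simp
    next
      case False
      have "Xf alpha p T x = 0"
        unfolding Xf_def using False p_props[OF sm p0 pT] by (intro sum.neutral) force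
      then show ?thesis by simp
    qed
  qed
  let ?a = "Xf alpha p T"
  obtain Ba where Ba: "\<And>x. \<bar>?a x\<bar> \<le> Ba" using Xf_bound by blast
  have am: "?a \<in> borel_measurable borel" by (rule Xf_meas)
  have ai: "integrable mu ?a" by (rule mu_int[OF am Ba])
  define D where "D = (\<lambda>x. 2 * (c - 1) * ?a x + 2 * c * (1 - c) * g x)"
  have Di: "integrable mu D" unfolding D_def using ai gi by auto
  have D0: "(\<integral>x. D x \<partial>mu) = 0"
  proof -
    have "(\<integral>x. D x \<partial>mu) = 2 * (c - 1) * (\<integral>x. ?a x \<partial>mu) + 2 * c * (1 - c) * (\<integral>x. g x \<partial>mu)"
      unfolding D_def using ai gi by (subst Bochner_Integration.integral_add) auto
    also have "\<dots> = 2 * (c - 1) + 2 * (1 - c) * (c * L)" using m1 gint by (simp add: algebra_simps)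
    finally show ?thesis using cL by simp
  qed
  have pw: "(?a x - 1)^2 = (c * g x - 1)^2 + (?a x - c * g x)^2 + D x" for x
  proof -
    have "(?a x - c * g x)^2 = (?a x)^2 - 2 * c * (?a x * g x) + c^2 * (g x * g x)"
      by (simp add: power2_eq_square algebra_simps)
    also have "\<dots> = (?a x)^2 - 2 * c * ?a x + c^2 * g x" unfolding ag gg ..
    finally have e1: "(?a x - c * g x)^2 = (?a x)^2 - 2 * c * ?a x + c^2 * g x" .
    have e2: "(c * g x - 1)^2 = c^2 * (g x * g x) - 2 * c * g x + 1"
      by (simp add: power2_eq_square algebra_simps)
    show ?thesis unfolding e1 e2 gg D_def by (simp add: power2_eq_square algebra_simps)
  qed
  have cg: "\<bar>c * g x\<bar> \<le> \<bar>c\<bar>" for x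
    unfolding abs_mult using gb[of x] by (simp add: mult_left_le)
  have i1: "integrable mu (\<lambda>x. (c * g x - 1)^2)"
  proof (rule mu_int_sq[of _ "\<bar>c\<bar> + 1"])
    show "(\<lambda>x. c * g x - 1) \<in> borel_measurable borel" using gm by measurable
    fix x show "\<bar>c * g x - 1\<bar> \<le> \<bar>c\<bar> + 1" using cg[of x] by arith
  qed
  have i2: "integrable mu (\<lambda>x. (?a x - c * g x)^2)"
  proof (rule mu_int_sq[of _ "Ba + \<bar>c\<bar>"])
    show "(\<lambda>x. ?a x - c * g x) \<in> borel_measurable borel" using gm am by measurable
    fix x show "\<bar>?a x - c * g x\<bar> \<le> Ba + \<bar>c\<bar>" using cg[of x] Ba[of x] by arith
  qed
  have "(\<integral>x. (?a x - 1)^2 \<partial>mu) = (\<integral>x. (c * g x - 1)^2 + (?a x - c * g x)^2 + D x \<partial>mu)"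
    unfolding pw ..
  also have "\<dots> = (\<integral>x. (c * g x - 1)^2 \<partial>mu) + (\<integral>x. (?a x - c * g x)^2 \<partial>mu)"
    using Bochner_Integration.integral_add[OF Bochner_Integration.integrable_add[OF i1 i2] Di]
      Bochner_Integration.integral_add[OF i1 i2] D0 by simp
  also have "\<dots> \<ge> (\<integral>x. (c * g x - 1)^2 \<partial>mu)"
    using Bochner_Integration.integral_nonneg[of mu "\<lambda>x. (?a x - c * g x)^2"] by simp
  finally show "(\<integral>x. (Xf ao p T x - (\<integral>x. Xf ao p T x \<partial>mu))^2 \<partial>mu)
      \<le> (\<integral>x. (Xf alpha p T x - (\<integral>x. Xf alpha p T x \<partial>mu))^2 \<partial>mu)"
    unfolding mao m1 unfolding Xao .
qed



theorem theorem4: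
  fixes n T :: nat and N :: "nat \<Rightarrow> nat set" and p :: "nat \<Rightarrow> real"
    and alpha_opt :: "nat \<Rightarrow> real"
  assumes "n > 0" and "T \<ge> 1"
    and "\<forall>i<n. N i \<subseteq> {..<n}"
    and "strict_mono_on {..T} p" and "0 \<le> p 0" and "p T \<le> 1"
  defines "alpha_opt \<equiv> (\<lambda>t. if t = 0 then -1 / (p T - p 0)
                             else if t = T then 1 / (p T - p 0) else 0)"
  shows "unbiased n T N p alpha_opt \<and>
         (\<forall>alpha. unbiased n T N p alpha \<longrightarrow>
            (\<forall>c0 c. est_var n T alpha_opt c0 c N p \<le> est_var n T alpha c0 c N p))"
proof -
  note n0 = assms(1) and T1 = assms(2) and Nsub = assms(3) and sm = assms(4)
    and p0 = assms(5) and pT = assms(6)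
  have pr: "\<forall>t\<le>T. 0 \<le> p t \<and> p t \<le> 1" using p_props[OF sm p0 pT] by blast
  have s_opt: "(\<Sum>t\<le>T. alpha_opt t) = 0"
    unfolding alpha_opt_def by (rule one_d_opt(1)[OF T1 sm p0 pT])
  have m_opt: "(\<integral>x. Xf alpha_opt p T x \<partial>mu) = 1"
    unfolding alpha_opt_def by (rule one_d_opt(2)[OF T1 sm p0 pT])
  have unb_opt: "unbiased n T N p alpha_opt"
    unfolding unbiased_def
    by (simp add: est_mean_formula[OF Nsub] TTE_formula[OF Nsub] s_opt m_opt)
  have main: "est_var n T alpha_opt c0 c N p \<le> est_var n T alpha c0 c N p"
    if ub: "unbiased n T N p alpha" for alpha c0 c
  proof -
    have s0: "(\<Sum>t\<le>T. alpha t) = 0"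
    proof -
      have "est_mean n T alpha (\<lambda>_. 1) (\<lambda>_ _. 0) N p = TTE n (\<lambda>_. 1) (\<lambda>_ _. 0) N"
        using ub unfolding unbiased_def by blast
      then show ?thesis using n0
        by (simp add: est_mean_formula[OF Nsub] TTE_formula[OF Nsub] Wt_def)
    qed
    let ?S = "(\<Sum>j<n. (Wt N c n j)^2)"
    show ?thesis
    proof (cases "?S = 0")
      case True
      then show ?thesis by (simp add: est_var_formula[OF Nsub])
    next
      case False
      have "\<exists>j<n. Wt N c n j \<noteq> 0"
      proof (rule ccontr)
        assume "\<not> (\<exists>j<n. Wt N c n j \<noteq> 0)"
        then have "?S = 0" by (intro sum.neutral) auto
        with False show False by simp
      qed
      then obtain j where j: "j < n" "Wt N c n j \<noteq> 0" by blast
      have "\<exists>i<n. j \<in> N i"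
      proof (rule ccontr)
        assume "\<not> (\<exists>i<n. j \<in> N i)"
        then have "Wt N c n j = 0" unfolding Wt_def by (intro sum.neutral) auto
        with j show False by simp
      qed
      then obtain i where i: "i < n" "j \<in> N i" by blast
      define c' where "c' = (\<lambda>i' j'. if i' = i \<and> j' = j then 1 else (0::real))"
      have W': "Wt N c' n j' = (if j' = j then 1 else 0)" for j'
      proof (cases "j' = j")
        case True
        have "Wt N c' n j' = (\<Sum>i'<n. if i' = i then 1 else 0)"
          unfolding Wt_def c'_def using True i by (intro sum.cong refl) auto
        also have "\<dots> = 1" using i by simp
        finally show ?thesis using True by simp
      next
        case False
        then have "Wt N c' n j' = 0" unfolding Wt_def c'_def by (intro sum.neutral) auto
        then show ?thesis using False by simp
      qed
      have "(\<Sum>j'<n. Wt N c' n j') = 1" unfolding W' using j by simp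
      moreover have "est_mean n T alpha (\<lambda>_. 0) c' N p = TTE n (\<lambda>_. 0) c' N"
        using ub unfolding unbiased_def by blast
      ultimately have m1: "(\<integral>x. Xf alpha p T x \<partial>mu) = 1"
        using n0 by (simp add: est_mean_formula[OF Nsub] TTE_formula[OF Nsub])
      have v: "(\<integral>x. (Xf alpha_opt p T x - (\<integral>x. Xf alpha_opt p T x \<partial>mu))^2 \<partial>mu)
          \<le> (\<integral>x. (Xf alpha p T x - (\<integral>x. Xf alpha p T x \<partial>mu))^2 \<partial>mu)"
        unfolding alpha_opt_def by (rule one_d(3)[OF T1 sm p0 pT s0 m1])
      have "0 \<le> (1 / real n)^2 * ?S" by (intro mult_nonneg_nonneg sum_nonneg) auto
      then show ?thesis unfolding est_var_formula[OF Nsub]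
        using v by (simp add: mult_left_mono)
    qed
  qed
  show ?thesis using unb_opt main by blast
qed


end
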